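(* Let $\mathcal{C}$ be a $[k+t-1,k]$ MDS code over $\mathbb{F}_q$ with generator matrix $\mathbf{G}\in\mathbb{F}_q^{k\times(k+t-1)}$, and let $\mathbf{q}\in\mathbb{F}_q^{\alpha\times\beta(k+t-1)}$ be a matrix such that for every $\mathcal{T}\subseteq[k+t-1]$ with $|\mathcal{T}|=t$, $$\mathrm{rank}(\mathbf{q}[:,\psi_\beta(\mathcal{T})])=|\mathrm{colsupp}(\mathbf{q}[:,\psi_\beta(\mathcal{T})])|.$$ Then $\mathrm{rank}\big((\mathbf{G}\otimes\mathbf{1}_\beta)\odot\mathbf{q}\big)=|\mathrm{colsupp}(\mathbf{q})|$.
   Context: $\psi_\beta(\mathcal{I})=\bigcup_{i\in\mathcal{I}}\{(i-1)\beta+1,\dots,i\beta\}$; $\mathbf{q}[:,\mathcal{J}]$ is the submatrix with columns indexed by $\mathcal{J}$; $\mathrm{colsupp}(\mathbf{W})$ is the set of indices of nonzero columns of $\mathbf{W}$. $\mathbf{1}_\beta$ is the all-one row vector of length $\beta$ and $\otimes$ the Kronecker product, so $\mathbf{G}\otimes\mathbf{1}_\beta\in\mathbb{F}_q^{k\times\beta(k+t-1)}$ repeats each column of $\mathbf{G}$ $\beta$ times. $\odot$ is the column-wise Khatri–Rao product: for $\mathbf{A}\in\mathbb{F}^{a\times N}$, $\mathbf{B}\in\mathbb{F}^{b\times N}$, $\mathbf{A}\odot\mathbf{B}\in\mathbb{F}^{ab\times N}$ has $c$-th column $\mathbf{A}[:,c]\otimes\mathbf{B}[:,c]$. *)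

theory Defs
  imports "Jordan_Normal_Form.DL_Rank_Submatrix"
begin

(* All indices are 0-based: [n] is {0..<n}. *)

definition mat_rank :: "'a::field mat \<Rightarrow> nat" where
  "mat_rank A = vec_space.rank (dim_row A) A"

definition psi :: "nat \<Rightarrow> nat set \<Rightarrow> nat set" where
  "psi \<beta> I = {c. c div \<beta> \<in> I \<and> c mod \<beta> < \<beta>}"

definition col_sub :: "'a mat \<Rightarrow> nat set \<Rightarrow> 'a mat" where
  "col_sub W J = submatrix W UNIV J"

definition colsupp :: "'a::zero mat \<Rightarrow> nat set" where
  "colsupp W = {c. c < dim_col W \<and> (\<exists>r < dim_row W. W $$ (r, c) \<noteq> 0)}"

(* G \<otimes> 1_beta : each column repeated beta times *)
definition kron_ones :: "'a mat \<Rightarrow> nat \<Rightarrow> 'a mat" where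
  "kron_ones G \<beta> = mat (dim_row G) (\<beta> * dim_col G) (\<lambda>(i, c). G $$ (i, c div \<beta>))"

definition khatri_rao :: "'a::times mat \<Rightarrow> 'a mat \<Rightarrow> 'a mat" where
  "khatri_rao A B = mat (dim_row A * dim_row B) (dim_col A)
     (\<lambda>(r, c). A $$ (r div dim_row B, c) * B $$ (r mod dim_row B, c))"

definition hweight :: "'a::zero vec \<Rightarrow> nat" where
  "hweight v = card {i. i < dim_vec v \<and> v $ i \<noteq> 0}"

definition gen_code :: "'a::comm_semiring_1 mat \<Rightarrow> 'a vec set" where
  "gen_code G = {transpose_mat G *\<^sub>v u | u. u \<in> carrier_vec (dim_row G)}"

definition min_dist :: "'a::comm_semiring_1 mat \<Rightarrow> nat" where
  "min_dist G = Min {hweight c | c. c \<in> gen_code G \<and> c \<noteq> 0\<^sub>v (dim_col G)}"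

definition is_MDS_generator :: "'a::field mat \<Rightarrow> nat \<Rightarrow> nat \<Rightarrow> bool" where
  "is_MDS_generator G n k \<longleftrightarrow> G \<in> carrier_mat k n \<and> mat_rank G = k
      \<and> min_dist G = n - k + 1"

end

theory Submission
  imports Defs
begin

context vec_space
begin

lemma col_zero_iff:
  assumes "A \<in> carrier_mat n nc" "c < nc"
  shows "col A c = 0\<^sub>v n \<longleftrightarrow> (\<forall>r<n. A $$ (r,c) = 0)"
  using assms by (auto simp: vec_eq_iff)

lemma nz_cols:
  assumes A: "A \<in> carrier_mat n nc"
  shows "set (cols A) - {0\<^sub>v n} = col A ` colsupp A"
proof -
  have "set (cols A) = col A ` {..<nc}" using A by (auto simp: cols_def)
  then show ?thesis using A col_zero_iff[OF A] unfolding colsupp_def by auto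
qed

lemma finite_colsupp: "finite (colsupp A)"
  unfolding colsupp_def by auto

lemma rank_le_nz:
  assumes A: "A \<in> carrier_mat n nc"
  obtains S where "rank A = card S" "S \<subseteq> col A ` colsupp A" "lin_indpt S"
proof -
  obtain S where S: "maximal S (\<lambda>T. T \<subseteq> set (cols A) \<and> lin_indpt T)"
    using maximal_exists[of "(\<lambda>T. T \<subseteq> set (cols A) \<and> lin_indpt T)" "card (set (cols A))" "{}"]
    by (meson List.finite_set card_mono empty_iff empty_subsetI finite_lin_indpt2 rev_finite_subset)
  have r: "rank A = card S" using rank_card_indpt[OF A S] .
  have li: "lin_indpt S" "S \<subseteq> set (cols A)" using S unfolding maximal_def by auto
  have "set (cols A) \<subseteq> carrier_vec n" using A cols_dim by blast
  have U: "UNIV \<noteq> {0::'a}" by (metis UNIV_I singletonD zero_neq_one)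
  then have "0\<^sub>v n \<notin> S" using zero_nin_lin_indpt[of S] li \<open>set (cols A) \<subseteq> carrier_vec n\<close> by auto
  then have "S \<subseteq> col A ` colsupp A" using li nz_cols[OF A] by auto
  then show ?thesis using that r li by auto
qed

lemma rank_colsupp_indpt:
  assumes A: "A \<in> carrier_mat n nc" and r: "rank A = card (colsupp A)"
  shows "lin_indpt (col A ` colsupp A)" "inj_on (col A) (colsupp A)"
proof -
  obtain S where S: "rank A = card S" "S \<subseteq> col A ` colsupp A" "lin_indpt S"
    using rank_le_nz[OF A] by blast
  have f: "finite (col A ` colsupp A)" using finite_colsupp by auto
  have c1: "card S \<le> card (col A ` colsupp A)" using card_mono[OF f S(2)] .
  have c2: "card (col A ` colsupp A) \<le> card (colsupp A)" using card_image_le finite_colsupp by blast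
  have "card S = card (col A ` colsupp A)" using c1 c2 S(1) r by linarith
  then have "S = col A ` colsupp A" using card_subset_eq[OF f S(2)] by auto
  then show "lin_indpt (col A ` colsupp A)" using S by auto
  have "card (col A ` colsupp A) = card (colsupp A)" using c1 c2 S(1) r by linarith
  then show "inj_on (col A) (colsupp A)" using eq_card_imp_inj_on finite_colsupp by blast
qed

lemma indpt_coeffs:
  assumes A: "A \<in> carrier_mat n nc" and Z: "Z \<subseteq> {..<nc}"
    and li: "lin_indpt (col A ` Z)" and inj: "inj_on (col A) Z"
    and s: "\<And>r. r < n \<Longrightarrow> (\<Sum>c\<in>Z. \<kappa> c * A $$ (r,c)) = 0"
    and c: "c \<in> Z"
  shows "\<kappa> c = 0"
proof -
  have fZ: "finite Z" using Z finite_subset by blast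
  define a where "a = (\<lambda>v. \<kappa> (inv_into Z (col A) v))"
  have sub: "col A ` Z \<subseteq> carrier_vec n" using A Z by auto
  have "lincomb a (col A ` Z) = 0\<^sub>v n"
  proof (rule eq_vecI)
    show "dim_vec (lincomb a (col A ` Z)) = dim_vec (0\<^sub>v n)"
      using lincomb_dim[OF _ sub] fZ by auto
    fix r assume "r < dim_vec (0\<^sub>v n)"
    then have r: "r < n" by auto
    have "lincomb a (col A ` Z) $ r = (\<Sum>x\<in>col A ` Z. a x * x $ r)"
      using lincomb_index[OF r sub] .
    also have "\<dots> = (\<Sum>c\<in>Z. a (col A c) * col A c $ r)"
      by (rule sum.reindex[OF inj, unfolded comp_def])
    also have "\<dots> = (\<Sum>c\<in>Z. \<kappa> c * A $$ (r,c))"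
      using inj Z A r by (intro sum.cong) (auto simp: a_def)
    finally show "lincomb a (col A ` Z) $ r = 0\<^sub>v n $ r" using s[OF r] r by simp
  qed
  then have "a \<in> col A ` Z \<rightarrow> {0}"
    using not_lindepD[OF li _ subset_refl] fZ by auto
  then have "a (col A c) = 0" using c by blast
  then show ?thesis using c inj by (simp add: a_def)
qed

lemma rank_from_coeffs:
  assumes A: "A \<in> carrier_mat n nc" and Z: "Z \<subseteq> {..<nc}"
    and zero: "\<And>c. c < nc \<Longrightarrow> c \<notin> Z \<Longrightarrow> col A c = 0\<^sub>v n"
    and K: "\<And>\<kappa>. (\<And>r. r < n \<Longrightarrow> (\<Sum>c\<in>Z. \<kappa> c * A $$ (r,c)) = 0) \<Longrightarrow> \<forall>c\<in>Z. \<kappa> c = 0"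
  shows "rank A = card Z"
proof -
  have fZ: "finite Z" using Z finite_subset by blast
  have sub: "col A ` Z \<subseteq> carrier_vec n" using A Z by auto
  have inj: "inj_on (col A) Z"
  proof (rule inj_onI, rule ccontr)
    fix c c' assume cc: "c \<in> Z" "c' \<in> Z" "col A c = col A c'" "c \<noteq> c'"
    define \<kappa> where "\<kappa> = (\<lambda>x. if x = c then 1 else if x = c' then -1 else (0::'a))"
    have "\<forall>c\<in>Z. \<kappa> c = 0"
    proof (rule K)
      fix r assume r: "r < n"
      have e: "A $$ (r,c) = A $$ (r,c')"
      proof -
        have "c < nc" "c' < nc" using cc Z by auto
        then have "A $$ (r,c) = col A c $ r" "A $$ (r,c') = col A c' $ r"
          using r A by auto
        then show ?thesis using cc(3) by simp
      qed
      have "(\<Sum>x\<in>Z. \<kappa> x * A $$ (r,x)) = (\<Sum>x\<in>{c,c'}. \<kappa> x * A $$ (r,x))"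
        by (rule sum.mono_neutral_right) (use fZ cc in \<open>simp_all add: \<kappa>_def\<close>)
      also have "\<dots> = 0" using cc(4) e by (simp add: \<kappa>_def)
      finally show "(\<Sum>x\<in>Z. \<kappa> x * A $$ (r,x)) = 0" .
    qed
    then have "\<kappa> c = 0" using cc(1) by blast
    then show False by (simp add: \<kappa>_def)
  qed
  have li: "lin_indpt (col A ` Z)"
  proof
    assume ld: "lin_dep (col A ` Z)"
    obtain a v where av: "a \<in> col A ` Z \<rightarrow> UNIV" "lincomb a (col A ` Z) = 0\<^sub>v n"
      "v \<in> col A ` Z" "a v \<noteq> 0"
      using finite_lin_dep[OF _ ld sub] fZ by auto
    have "\<forall>c\<in>Z. a (col A c) = 0"
    proof (rule K)
      fix r assume r: "r < n"
      have "(\<Sum>c\<in>Z. a (col A c) * A $$ (r,c)) = (\<Sum>c\<in>Z. a (col A c) * col A c $ r)"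
        using Z A r by (intro sum.cong) auto
      also have "\<dots> = (\<Sum>x\<in>col A ` Z. a x * x $ r)"
        by (rule sum.reindex[OF inj, unfolded comp_def, symmetric])
      also have "\<dots> = lincomb a (col A ` Z) $ r" using lincomb_index[OF r sub] by simp
      also have "\<dots> = 0" using av(2) r by simp
      finally show "(\<Sum>c\<in>Z. a (col A c) * A $$ (r,c)) = 0" .
    qed
    then show False using av by auto
  qed
  have U: "UNIV \<noteq> {0::'a}" by (metis UNIV_I singletonD zero_neq_one)
  have colsA: "set (cols A) = col A ` {..<nc}" using A by (auto simp: cols_def)
  have max: "maximal (col A ` Z) (\<lambda>T. T \<subseteq> set (cols A) \<and> lin_indpt T)"
    unfolding maximal_def
  proof (intro conjI allI impI)
    show "col A ` Z \<subseteq> set (cols A)" using colsA Z by auto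
    show "lin_indpt (col A ` Z)" using li .
    fix B assume B: "col A ` Z \<subseteq> B \<and> B \<subseteq> set (cols A) \<and> lin_indpt B"
    have "set (cols A) \<subseteq> carrier_vec n" using A cols_dim by blast
    then have "0\<^sub>v n \<notin> B" using zero_nin_lin_indpt[of B] B U by auto
    have "B \<subseteq> col A ` Z"
    proof
      fix x assume x: "x \<in> B"
      then obtain c where c: "c < nc" "x = col A c" using B colsA by auto
      show "x \<in> col A ` Z"
      proof (cases "c \<in> Z")
        case False then show ?thesis using zero[OF c(1) False] c x \<open>0\<^sub>v n \<notin> B\<close> by simp
      qed (use c in auto)
    qed
    then show "B = col A ` Z" using B by auto
  qed
  show ?thesis using rank_card_indpt[OF A max] card_image[OF inj] by simp
qed

lemma exists_kernel:
  fixes B :: "'a mat"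
  assumes B: "B \<in> carrier_mat n m" and nm: "n < m"
  shows "\<exists>v \<in> carrier_vec m. v \<noteq> 0\<^sub>v m \<and> B *\<^sub>v v = 0\<^sub>v n"
proof (cases "distinct (cols B)")
  case True
  have sub: "set (cols B) \<subseteq> carrier_vec n" using B cols_dim by blast
  have "lin_dep (set (cols B))"
  proof (rule ccontr)
    assume li: "lin_indpt (set (cols B))"
    have "card (set (cols B)) \<le> dim" using li_le_dim(2)[OF fin_dim sub li] .
    moreover have "card (set (cols B)) = m" using distinct_card[OF True] B by simp
    ultimately show False using dim_is_n nm by simp
  qed
  then obtain v where "v \<in> carrier_vec m" "v \<noteq> 0\<^sub>v m" "B *\<^sub>v v = 0\<^sub>v n"
    using lin_depE[OF B _ True] by blast
  then show ?thesis by blast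
next
  case False
  then obtain i j where ij: "i < m" "j < m" "i \<noteq> j" "cols B ! i = cols B ! j"
    using B unfolding distinct_conv_nth by auto
  then have cij: "col B i = col B j" using B by simp
  define v where "v = vec m (\<lambda>x. if x = i then 1 else if x = j then -1 else (0::'a))"
  have "v $ i = 1" using ij by (simp add: v_def)
  then have "v \<noteq> 0\<^sub>v m" using ij by auto
  moreover have "B *\<^sub>v v = 0\<^sub>v n"
  proof (rule eq_vecI)
    show "dim_vec (B *\<^sub>v v) = dim_vec (0\<^sub>v n)" using B by simp
    fix r assume "r < dim_vec (0\<^sub>v n)"
    then have r: "r < n" by simp
    have e: "B $$ (r,i) = B $$ (r,j)"
    proof -
      have 1: "col B i $ r = B $$ (r,i)" by (rule index_col) (use r B ij in auto)
      have 2: "col B j $ r = B $$ (r,j)" by (rule index_col) (use r B ij in auto)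
      show ?thesis using 1 2 cij by metis
    qed
    have "(B *\<^sub>v v) $ r = (\<Sum>x\<in>{0..<m}. B $$ (r,x) * v $ x)"
      using r B by (simp add: scalar_prod_def v_def)
    also have "\<dots> = (\<Sum>x\<in>{i,j}. B $$ (r,x) * v $ x)"
      by (rule sum.mono_neutral_right) (use ij in \<open>simp_all add: v_def\<close>)
    also have "\<dots> = 0" using ij e by (simp add: v_def)
    finally show "(B *\<^sub>v v) $ r = 0\<^sub>v n $ r" using r by simp
  qed
  moreover have "v \<in> carrier_vec m" by (simp add: v_def)
  ultimately show ?thesis by blast
qed

lemma rank_full_orth:
  fixes A :: "'a mat"
  assumes A: "A \<in> carrier_mat n m" and r: "rank A = n" and u: "u \<in> carrier_vec n"
    and orth: "\<And>c. c < m \<Longrightarrow> col A c \<bullet> u = 0"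
  shows "u = 0\<^sub>v n"
proof -
  obtain S where S: "rank A = card S" "S \<subseteq> col A ` colsupp A" "lin_indpt S"
    using rank_le_nz[OF A] by blast
  have Sc: "S \<subseteq> col A ` {..<m}" using S(2) A unfolding colsupp_def by auto
  have Scar: "S \<subseteq> carrier_vec n" using Sc A by auto
  have fS: "finite S" using Sc finite_subset by blast
  have "basis S" by (rule dim_li_is_basis[OF fin_dim fS Scar S(3)]) (use S(1) r dim_is_n in simp)
  then have spS: "span S = carrier_vec n" unfolding basis_def by simp
  have "u \<in> orthogonal_complement S"
    unfolding orthogonal_complement_def
  proof (intro CollectI conjI ballI)
    show "u \<in> carrier_vec n" using u .
    fix y assume "y \<in> S"
    then obtain c where c: "c < m" "y = col A c" using Sc by auto
    have "col A c \<in> carrier_vec n" using A c by auto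
    then show "u \<bullet> y = 0" using orth[OF c(1)] comm_scalar_prod[OF u] c by metis
  qed
  then have uo: "u \<in> orthogonal_complement (span S)" using in_orthogonal_complement_span[OF Scar] by simp
  show ?thesis
  proof (rule eq_vecI)
    show "dim_vec u = dim_vec (0\<^sub>v n)" using u by simp
    fix i assume "i < dim_vec (0\<^sub>v n)"
    then have i: "i < n" by simp
    have "unit_vec n i \<in> span S" using spS i by simp
    then have "u \<bullet> unit_vec n i = 0" using uo unfolding orthogonal_complement_def by blast
    then show "u $ i = 0\<^sub>v n $ i" using i u by simp
  qed
qed

lemma sub_indpt:
  fixes q :: "'a mat"
  assumes q: "q \<in> carrier_mat n N" and r: "rank (col_sub q J) = card (colsupp (col_sub q J))"
  shows "lin_indpt (col q ` (colsupp q \<inter> {c. c < N \<and> c \<in> J}))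
       \<and> inj_on (col q) (colsupp q \<inter> {c. c < N \<and> c \<in> J})"
proof -
  define J' where "J' = {c. c < N \<and> c \<in> J}"
  define Z where "Z = colsupp q \<inter> J'"
  define A where "A = col_sub q J"
  define m where "m = card J'"
  have dr: "card {i. i < n \<and> i \<in> (UNIV::nat set)} = n" by simp
  have Ac: "A \<in> carrier_mat n m"
    using q unfolding A_def col_sub_def m_def J'_def by (auto simp: dim_submatrix)
  have fJ': "finite J'" unfolding J'_def by auto
  have pick_in: "pick J i \<in> J'" if i: "i < m" for i
  proof -
    have "pick J i < N" using pick_le i q unfolding m_def J'_def by auto
    moreover have "pick J i \<in> J"
    proof (cases "finite J")
      case True
      have "J' \<subseteq> J" unfolding J'_def by auto
      then have "m \<le> card J" unfolding m_def using True card_mono by blast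
      then show ?thesis using pick_in_set i by auto
    qed (use pick_in_set in auto)
    ultimately show ?thesis unfolding J'_def by auto
  qed
  have colA: "col A i = col q (pick J i)" if i: "i < m" for i
  proof (rule eq_vecI)
    show "dim_vec (col A i) = dim_vec (col q (pick J i))" using Ac q by simp
    fix r assume "r < dim_vec (col q (pick J i))"
    then have r: "r < n" using q by simp
    have pl: "pick J i < N" using pick_in[OF i] unfolding J'_def by auto
    have "col A i $ r = A $$ (r, i)" using Ac r i by simp
    also have "\<dots> = q $$ (pick UNIV r, pick J i)" unfolding A_def col_sub_def
      by (rule submatrix_index) (use r i q in \<open>simp_all add: m_def J'_def\<close>)
    also have "\<dots> = col q (pick J i) $ r" using r pl q by (simp add: pick_UNIV)
    finally show "col A i $ r = col q (pick J i) $ r" .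
  qed
  have idx: "card {a\<in>J. a < j} < m \<and> pick J (card {a\<in>J. a < j}) = j" if j: "j \<in> J'" for j
  proof
    show "pick J (card {a\<in>J. a < j}) = j" using pick_card_in_set j unfolding J'_def by auto
    have "{a\<in>J. a < j} \<subset> J'" using j unfolding J'_def by auto
    then show "card {a\<in>J. a < j} < m" unfolding m_def using psubset_card_mono fJ' by blast
  qed
  have csA: "colsupp A = {i. i < m \<and> col A i \<noteq> 0\<^sub>v n}"
    using Ac col_zero_iff[OF Ac] unfolding colsupp_def by auto
  have csq: "colsupp q = {c. c < N \<and> col q c \<noteq> 0\<^sub>v n}"
    using q col_zero_iff[OF q] unfolding colsupp_def by auto
  have rA: "rank A = card (colsupp A)" using r unfolding A_def .
  note RA = rank_colsupp_indpt[OF Ac rA]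
  have img: "col A ` colsupp A = col q ` Z"
  proof
    show "col A ` colsupp A \<subseteq> col q ` Z"
    proof
      fix x assume "x \<in> col A ` colsupp A"
      then obtain i where i: "i < m" "col A i \<noteq> 0\<^sub>v n" "x = col A i" using csA by auto
      have "pick J i \<in> Z" using pick_in[OF i(1)] colA[OF i(1)] i(2) csq
        unfolding Z_def J'_def by auto
      then show "x \<in> col q ` Z" using i colA by auto
    qed
    show "col q ` Z \<subseteq> col A ` colsupp A"
    proof
      fix x assume "x \<in> col q ` Z"
      then obtain j where j: "j \<in> Z" "x = col q j" by auto
      then have jJ: "j \<in> J'" unfolding Z_def by auto
      note ij = idx[OF jJ]
      have "col A (card {a\<in>J. a < j}) = col q j" using colA ij by metis
      moreover have "col q j \<noteq> 0\<^sub>v n" using j csq unfolding Z_def by auto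
      ultimately have "card {a\<in>J. a < j} \<in> colsupp A" using csA ij by auto
      then show "x \<in> col A ` colsupp A" unfolding j(2)
        by (rule image_eqI[rotated]) (use \<open>col A (card {a\<in>J. a < j}) = col q j\<close> in simp)
    qed
  qed
  have inj: "inj_on (col q) Z"
  proof (rule inj_onI)
    fix j1 j2 assume j: "j1 \<in> Z" "j2 \<in> Z" "col q j1 = col q j2"
    define i1 where "i1 = card {a\<in>J. a < j1}"
    define i2 where "i2 = card {a\<in>J. a < j2}"
    have J: "j1 \<in> J'" "j2 \<in> J'" using j unfolding Z_def by auto
    have e1: "col A i1 = col q j1" "i1 < m" "pick J i1 = j1" using colA idx[OF J(1)] unfolding i1_def by metis+
    have e2: "col A i2 = col q j2" "i2 < m" "pick J i2 = j2" using colA idx[OF J(2)] unfolding i2_def by metis+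
    have "col q j1 \<noteq> 0\<^sub>v n" using j csq unfolding Z_def by auto
    then have "i1 \<in> colsupp A" "i2 \<in> colsupp A" using csA e1 e2 j(3) by auto
    then have "i1 = i2" using RA(2) e1 e2 j(3) inj_onD by metis
    then show "j1 = j2" using e1 e2 by simp
  qed
  show ?thesis using RA(1) img inj unfolding Z_def J'_def by simp
qed

end

lemma mds_nonzero:
  fixes G :: "'a::field mat"
  assumes G: "G \<in> carrier_mat k n" and rk: "mat_rank G = k" and md: "min_dist G = n - k + 1"
    and u: "u \<in> carrier_vec k" "u \<noteq> 0\<^sub>v k"
    and T: "T \<subseteq> {0..<n}" "card T = n - k + 1" and j: "j \<in> T"
    and R: "\<And>j'. j' < n \<Longrightarrow> j' \<notin> T \<Longrightarrow> (\<Sum>i<k. u $ i * G $$ (i,j')) = 0"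
  shows "(\<Sum>i<k. u $ i * G $$ (i,j)) \<noteq> 0"
proof
  assume j0: "(\<Sum>i<k. u $ i * G $$ (i,j)) = 0"
  define w where "w = transpose_mat G *\<^sub>v u"
  have wc: "w \<in> gen_code G" unfolding w_def gen_code_def using u G by auto
  have dw: "dim_vec w = n" unfolding w_def using G by simp
  have wj: "w $ j' = (\<Sum>i<k. u $ i * G $$ (i,j'))" if "j' < n" for j'
    unfolding w_def using that G u
    by (simp add: scalar_prod_def mult.commute lessThan_atLeast0)
  have "w \<noteq> 0\<^sub>v n"
  proof
    assume w0: "w = 0\<^sub>v n"
    have "u = 0\<^sub>v k"
    proof (rule vec_space.rank_full_orth[OF G _ u(1)])
      show "vec_space.rank k G = k" using rk G unfolding mat_rank_def by simp
      fix c assume c: "c < n"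
      have "col G c \<bullet> u = (\<Sum>i<k. u $ i * G $$ (i,c))"
        using c G u by (simp add: scalar_prod_def mult.commute lessThan_atLeast0)
      also have "\<dots> = 0" using wj[OF c] w0 c by simp
      finally show "col G c \<bullet> u = 0" .
    qed
    then show False using u by simp
  qed
  have sub: "{i. i < dim_vec w \<and> w $ i \<noteq> 0} \<subseteq> T - {j}"
  proof
    fix x assume "x \<in> {i. i < dim_vec w \<and> w $ i \<noteq> 0}"
    then have x: "x < n" "w $ x \<noteq> 0" using dw by auto
    then have "x \<in> T" using wj[OF x(1)] R[OF x(1)] by metis
    moreover have "x \<noteq> j" using x wj j0 by metis
    ultimately show "x \<in> T - {j}" by simp
  qed
  have fT: "finite T" using T(1) finite_subset by blast
  have "hweight w \<le> card (T - {j})"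
    unfolding hweight_def by (rule card_mono) (use fT sub in auto)
  also have "\<dots> = n - k" using T(2) j fT by simp
  finally have hw: "hweight w \<le> n - k" .
  have fin: "finite {hweight c | c. c \<in> gen_code G \<and> c \<noteq> 0\<^sub>v (dim_col G)}"
  proof (rule finite_subset[of _ "{..n}"])
    show "{hweight c | c. c \<in> gen_code G \<and> c \<noteq> 0\<^sub>v (dim_col G)} \<subseteq> {..n}"
    proof
      fix x assume "x \<in> {hweight c | c. c \<in> gen_code G \<and> c \<noteq> 0\<^sub>v (dim_col G)}"
      then obtain c where c: "x = hweight c" "c \<in> gen_code G" by auto
      have "dim_vec c = n" using c(2) G unfolding gen_code_def by auto
      moreover have "hweight c \<le> card {i. i < dim_vec c}"
        unfolding hweight_def by (rule card_mono) auto
      ultimately show "x \<in> {..n}" using c by simp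
    qed
  qed simp
  have "min_dist G \<le> hweight w"
    unfolding min_dist_def by (rule Min_le[OF fin]) (use wc \<open>w \<noteq> 0\<^sub>v n\<close> G in auto)
  then show False using md hw by simp
qed


theorem lemma7:
  fixes G q :: "'a::{field,finite} mat" and k t \<alpha> \<beta> :: nat
  assumes "1 \<le> k"
    and "is_MDS_generator G (k + t - 1) k"
    and "q \<in> carrier_mat \<alpha> (\<beta> * (k + t - 1))"
    and "\<And>T. T \<subseteq> {0..<k + t - 1} \<Longrightarrow> card T = t \<Longrightarrow>
           mat_rank (col_sub q (psi \<beta> T)) = card (colsupp (col_sub q (psi \<beta> T)))"
  shows "mat_rank (khatri_rao (kron_ones G \<beta>) q) = card (colsupp q)"
proof -
  define n where "n = k + t - 1"
  have G: "G \<in> carrier_mat k n" and rk: "mat_rank G = k" and md: "min_dist G = n - k + 1"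
    using assms(2) unfolding is_MDS_generator_def n_def by auto
  have t1: "t \<ge> 1"
  proof (rule ccontr)
    assume "\<not> 1 \<le> t" then have "n < k" using assms(1) n_def by simp
    moreover have "vec_space.rank k G \<le> n" using vec_space.rank_le_nc[OF G] .
    ultimately show False using rk G unfolding mat_rank_def by simp
  qed
  have nt: "n - k + 1 = t" "t \<le> n" using t1 assms(1) n_def by auto
  have q: "q \<in> carrier_mat \<alpha> (\<beta>*n)" using assms(3) n_def by simp
  define M where "M = khatri_rao (kron_ones G \<beta>) q"
  have Mc: "M \<in> carrier_mat (k*\<alpha>) (\<beta>*n)" using G q by (simp add: M_def khatri_rao_def kron_ones_def)
  have Mij: "M $$ (r,c) = G $$ (r div \<alpha>, c div \<beta>) * q $$ (r mod \<alpha>, c)" if rc: "r < k*\<alpha>" "c < \<beta>*n" for r c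
  proof -
    have "r div \<alpha> < k" using rc(1) by (simp add: less_mult_imp_div_less)
    then show ?thesis using rc G q by (simp add: M_def khatri_rao_def kron_ones_def)
  qed
  define Z where "Z = colsupp q"
  have Zsub: "Z \<subseteq> {..<\<beta>*n}" unfolding Z_def colsupp_def using q by auto
  have fZ: "finite Z" using Zsub finite_subset by blast
  have zero: "col M c = 0\<^sub>v (k*\<alpha>)" if c: "c < \<beta>*n" "c \<notin> Z" for c
  proof (rule eq_vecI)
    show "dim_vec (col M c) = dim_vec (0\<^sub>v (k*\<alpha>))" using Mc by simp
    fix r assume "r < dim_vec (0\<^sub>v (k*\<alpha>))"
    then have r: "r < k*\<alpha>" by simp
    then have "\<alpha> > 0" by (cases \<alpha>) auto
    then have "r mod \<alpha> < \<alpha>" by simp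
    then have "q $$ (r mod \<alpha>, c) = 0" using c q unfolding Z_def colsupp_def by auto
    then show "col M c $ r = 0\<^sub>v (k*\<alpha>) $ r" using r c Mc Mij[OF r c(1)] by simp
  qed
  have K: "\<forall>c\<in>Z. \<kappa> c = 0"
    if H: "\<And>r. r < k*\<alpha> \<Longrightarrow> (\<Sum>c\<in>Z. \<kappa> c * M $$ (r,c)) = 0" for \<kappa>
  proof
    fix c0 assume c0: "c0 \<in> Z"
    then obtain s0 where c0b: "c0 < \<beta>*n" "s0 < \<alpha>" "q $$ (s0,c0) \<noteq> 0"
      using q unfolding Z_def colsupp_def by auto
    have bpos: "\<beta> > 0" using c0b by (cases \<beta>) auto
    define j0 where "j0 = c0 div \<beta>"
    have j0n: "j0 < n" using c0b bpos unfolding j0_def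
      by (simp add: less_mult_imp_div_less mult.commute)
    have H2: "(\<Sum>c\<in>Z. \<kappa> c * (G $$ (i, c div \<beta>) * q $$ (s,c))) = 0" if iks: "i < k" "s < \<alpha>" for i s
    proof -
      have r: "i*\<alpha> + s < k*\<alpha>"
      proof -
        have "i*\<alpha> + s < (i+1)*\<alpha>" using iks by simp
        also have "\<dots> \<le> k*\<alpha>" using iks by (intro mult_le_mono1) simp
        finally show ?thesis .
      qed
      have d: "(i*\<alpha>+s) div \<alpha> = i" "(i*\<alpha>+s) mod \<alpha> = s" using iks by auto
      have "(\<Sum>c\<in>Z. \<kappa> c * (G $$ (i, c div \<beta>) * q $$ (s,c))) = (\<Sum>c\<in>Z. \<kappa> c * M $$ (i*\<alpha>+s, c))"
      proof (rule sum.cong[OF refl])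
        fix c assume "c \<in> Z"
        then have cb: "c < \<beta>*n" using Zsub by auto
        show "\<kappa> c * (G $$ (i, c div \<beta>) * q $$ (s,c)) = \<kappa> c * M $$ (i*\<alpha>+s, c)"
          using Mij[OF r cb] d by simp
      qed
      then show ?thesis using H[OF r] by simp
    qed
    have "t - 1 \<le> card ({0..<n} - {j0})" using j0n nt by simp
    then obtain T0 where T0: "T0 \<subseteq> {0..<n} - {j0}" "card T0 = t - 1" "finite T0"
      by (rule obtain_subset_with_card_n)
    define T where "T = insert j0 T0"
    have "j0 \<notin> T0" using T0 by auto
    then have cT: "card T = t" using T0 t1 unfolding T_def by simp
    have T: "T \<subseteq> {0..<n}" "card T = t" "j0 \<in> T" using T0 j0n cT unfolding T_def by auto
    define R where "R = {0..<n} - T"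
    have "card R = card {0..<n} - card T" unfolding R_def
      by (rule card_Diff_subset) (use T finite_subset in auto)
    then have cR: "card R = k - 1" using T(2) nt n_def by simp
    obtain h where h: "bij_betw h {0..<k-1} R" using ex_bij_betw_nat_finite[of R] cR unfolding R_def by auto
    define B where "B = mat (k-1) k (\<lambda>(a,i). G $$ (i, h a))"
    have Bc: "B \<in> carrier_mat (k-1) k" unfolding B_def by simp
    obtain u where u: "u \<in> carrier_vec k" "u \<noteq> 0\<^sub>v k" "B *\<^sub>v u = 0\<^sub>v (k-1)"
      using vec_space.exists_kernel[OF Bc] assms(1) by auto
    define \<mu> where "\<mu> j = (\<Sum>i<k. u $ i * G $$ (i,j))" for j
    have \<mu>R: "\<mu> j = 0" if j: "j < n" "j \<notin> T" for j
    proof -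
      have "j \<in> R" using j unfolding R_def by auto
      then obtain a where a: "a < k-1" "h a = j" using h unfolding bij_betw_def by auto
      have "(B *\<^sub>v u) $ a = 0" using u(3) a by simp
      moreover have "(B *\<^sub>v u) $ a = \<mu> j" using a u(1) unfolding B_def \<mu>_def
        by (simp add: scalar_prod_def mult.commute lessThan_atLeast0)
      ultimately show ?thesis by simp
    qed
    have \<mu>T: "\<mu> j0 \<noteq> 0" unfolding \<mu>_def
      by (rule mds_nonzero[OF G rk md u(1,2) T(1) _ T(3)]) (use nt T \<mu>R in \<open>auto simp: \<mu>_def\<close>)
    define J' where "J' = {c. c < \<beta>*n \<and> c \<in> psi \<beta> T}"
    have S1: "(\<Sum>c\<in>Z. (\<kappa> c * \<mu> (c div \<beta>)) * q $$ (s,c)) = 0" if s: "s < \<alpha>" for s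
    proof -
      have "(\<Sum>c\<in>Z. (\<kappa> c * \<mu> (c div \<beta>)) * q $$ (s,c))
          = (\<Sum>c\<in>Z. \<Sum>i<k. u $ i * (\<kappa> c * (G $$ (i, c div \<beta>) * q $$ (s,c))))"
        unfolding \<mu>_def by (intro sum.cong refl) (simp add: sum_distrib_left sum_distrib_right algebra_simps)
      also have "\<dots> = (\<Sum>i<k. u $ i * (\<Sum>c\<in>Z. \<kappa> c * (G $$ (i, c div \<beta>) * q $$ (s,c))))"
        by (subst sum.swap) (simp add: sum_distrib_left)
      also have "\<dots> = 0" using H2 s by simp
      finally show ?thesis .
    qed
    have S2: "(\<Sum>c\<in>Z \<inter> J'. (\<kappa> c * \<mu> (c div \<beta>)) * q $$ (s,c)) = 0" if s: "s < \<alpha>" for s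
    proof -
      have "(\<Sum>c\<in>Z \<inter> J'. (\<kappa> c * \<mu> (c div \<beta>)) * q $$ (s,c)) = (\<Sum>c\<in>Z. (\<kappa> c * \<mu> (c div \<beta>)) * q $$ (s,c))"
      proof (rule sum.mono_neutral_left[OF fZ])
        show "Z \<inter> J' \<subseteq> Z" by auto
        show "\<forall>c\<in>Z - Z \<inter> J'. \<kappa> c * \<mu> (c div \<beta>) * q $$ (s, c) = 0"
        proof
          fix c assume c: "c \<in> Z - Z \<inter> J'"
          then have cb: "c < \<beta>*n" using Zsub by auto
          then have "c div \<beta> < n" using bpos by (simp add: less_mult_imp_div_less mult.commute)
          moreover have "c div \<beta> \<notin> T" using c cb bpos unfolding J'_def psi_def by auto
          ultimately show "\<kappa> c * \<mu> (c div \<beta>) * q $$ (s, c) = 0" using \<mu>R by simp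
        qed
      qed
      then show ?thesis using S1[OF s] by simp
    qed
    have hyp: "mat_rank (col_sub q (psi \<beta> T)) = card (colsupp (col_sub q (psi \<beta> T)))"
      using assms(4)[of T] T n_def by auto
    have dimr: "dim_row (col_sub q (psi \<beta> T)) = \<alpha>" using q by (simp add: col_sub_def dim_submatrix)
    have LI: "module.lin_indpt class_ring (module_vec TYPE('a) \<alpha>) (col q ` (Z \<inter> J'))"
       "inj_on (col q) (Z \<inter> J')"
      using vec_space.sub_indpt[OF q, of "psi \<beta> T"] hyp dimr unfolding mat_rank_def Z_def J'_def by auto
    have c0J: "c0 \<in> Z \<inter> J'" using c0 c0b T(3) bpos unfolding J'_def psi_def j0_def by auto
    have "\<kappa> c0 * \<mu> (c0 div \<beta>) = 0"
      by (rule vec_space.indpt_coeffs[OF q _ LI S2 c0J]) (use Zsub in auto)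
    then show "\<kappa> c0 = 0" using \<mu>T unfolding j0_def by simp
  qed
  have "vec_space.rank (k*\<alpha>) M = card Z"
    by (rule vec_space.rank_from_coeffs[OF Mc Zsub zero K]) auto
  then show ?thesis unfolding mat_rank_def M_def Z_def using Mc by (simp add: M_def)
qed

end
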